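(* Fix $\varepsilon\in(0,1/2]$. Let $\mathcal C$ be a linear $[n,k]$ code over $F$ with $k/n\in[\varepsilon,1-\varepsilon]$, let $L\in\mathbb Z^+$ satisfy $L<\frac{1}{\sqrt{2n}}\,2^{\eta_q(\varepsilon)n}$, and let $\tau\in\mathbb Z_{\ge0}$ satisfy $\tau\ge\frac{L(n-k)}{L+1}$. If $\mathcal C$ is $(\tau,L)$-list decodable, then $\mathcal C$ is MDS.
   Context: $F=\mathrm{GF}(q)$. For $L\in\mathbb Z^+$ and $\tau\in\mathbb Z_{\ge0}$, a code $\mathcal C\subseteq F^n$ is $(\tau,L)$-list decodable if for every $y\in F^n$ at most $L$ codewords of $\mathcal C$ lie at Hamming distance at most $\tau$ from $y$. With $\mathsf h(x)=-x\log_2x-(1-x)\log_2(1-x)$, define $\eta_q(\varepsilon)=\mathsf h\!\left(\frac{q-1}{q}(1-\varepsilon)\right)-(1-\varepsilon)\,\mathsf h(1/q)$. *)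

theory Defs
  imports "HOL-Analysis.Analysis"
begin

text \<open>Words of length n are vectors in 'a^'n, n = CARD('n); F = 'a a finite field, q = CARD('a).\<close>

definition hamming_dist :: "'a ^ 'n \<Rightarrow> 'a ^ 'n \<Rightarrow> nat" where
  "hamming_dist x y = card {i. x $ i \<noteq> y $ i}"

definition list_decodable :: "('a ^ 'n) set \<Rightarrow> nat \<Rightarrow> nat \<Rightarrow> bool" where
  "list_decodable C \<tau> L \<longleftrightarrow> (\<forall>y. card {c \<in> C. hamming_dist c y \<le> \<tau>} \<le> L)"

definition min_dist :: "('a ^ 'n) set \<Rightarrow> nat" where
  "min_dist C = Inf {hamming_dist x y | x y. x \<in> C \<and> y \<in> C \<and> x \<noteq> y}"

definition is_MDS :: "('a::field ^ 'n) set \<Rightarrow> bool" where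
  "is_MDS C \<longleftrightarrow> min_dist C = CARD('n) - vec.dim C + 1"

definition bin_entropy :: "real \<Rightarrow> real" where
  "bin_entropy x = - x * log 2 x - (1 - x) * log 2 (1 - x)"

definition eta :: "nat \<Rightarrow> real \<Rightarrow> real" where
  "eta q \<epsilon> = bin_entropy ((real q - 1) / real q * (1 - \<epsilon>)) - (1 - \<epsilon>) * bin_entropy (1 / real q)"

end

theory Submission
  imports Defs "HOL-Real_Asymp.Real_Asymp"
begin


lemma binom_step_real:
  assumes "m < n"
  shows "real (n choose Suc m) * (real m + 1) = real (n choose m) * (real n - real m)"
proof -
  obtain b where b: "n = Suc (m + b)" using assms by (metis add_Suc_right less_iff_Suc_add)
  have "Suc m * (Suc (m + b) choose Suc m) = Suc b * (Suc (m + b) choose m)"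
    by (rule Suc_times_binomial_add)
  hence "real (Suc m) * real (n choose Suc m) = real (Suc b) * real (n choose m)"
    unfolding b by (metis of_nat_mult)
  thus ?thesis using b by (simp add: algebra_simps)
qed

lemma cancel_aux: fixes x y A B :: real
  assumes "x > 0" "y > 0" "x * (A * y) \<le> x * B * y" shows "A \<le> B"
  using assms by simp

lemma e_step:
  fixes j :: nat assumes "j \<ge> 1"
  shows "(real j + 1) ^ (2*j+1) \<le> real j ^ j * (real j + 2) ^ (j+1)"
proof -
  define x where "x = - 1 / (real j + 1)^2"
  have x1: "-1 \<le> x" unfolding x_def using assms by (simp add: field_simps)
  have B: "1 + real (j+1) * x \<le> (1 + x) ^ (j+1)" by (rule Bernoulli_inequality[OF x1])
  have pos: "real j + 1 > 0" by simp
  have nz: "0 < 1 + (real j * real j + real j * 2)" by (simp add: add_pos_nonneg)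
  have lhs: "1 + real (j+1) * x = real j / (real j + 1)"
    unfolding x_def using pos nz by (simp add: field_simps power2_eq_square)
  have rhs: "1 + x = real j * (real j + 2) / (real j + 1)^2"
    unfolding x_def using pos nz by (simp add: field_simps power2_eq_square)
  have "real j / (real j + 1) \<le> (real j * (real j + 2))^(j+1) / ((real j + 1)^2)^(j+1)"
    using B lhs rhs by (simp add: power_divide)
  hence H1: "real j * ((real j + 1)^2)^(j+1) \<le> (real j * (real j + 2))^(j+1) * (real j + 1)"
    using pos by (simp add: field_simps)
  have e1: "((real j + 1)^2)^(j+1) = (real j + 1)^(2*j+1) * (real j + 1)"
  proof -
    have "((real j + 1)^2)^(j+1) = (real j + 1)^(2*(j+1))" by (simp only: power_mult)
    also have "(2::nat)*(j+1) = Suc (2*j+1)" by simp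
    finally show ?thesis by (simp only: power_Suc2)
  qed
  have e2: "(real j * (real j + 2))^(j+1) = real j * (real j ^ j * (real j + 2)^(j+1))"
    by (simp add: power_mult_distrib)
  have H2: "real j * ((real j + 1)^(2*j+1) * (real j + 1)) \<le> real j * (real j ^ j * (real j + 2)^(j+1)) * (real j + 1)"
    using H1 unfolding e1 e2 .
  show ?thesis
    by (rule cancel_aux[OF _ _ H2]) (use assms in simp_all)
qed

lemma frac_le_helper: fixes x y w z :: real
  assumes "0 < y" "0 < z" "x * z \<le> w * y" shows "x / y \<le> w / z"
  using assms by (simp add: divide_simps)

definition ee :: "nat \<Rightarrow> real" where "ee j = ((real j + 1) / real j) ^ j"

lemma ee_Suc: assumes "j \<ge> 1" shows "ee j \<le> ee (Suc j)"
proof -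
  have h: "(real j + 1) ^ (2*j+1) \<le> real j ^ j * (real j + 2) ^ (j+1)" using e_step[OF assms] .
  have jp: "real j > 0" using assms by simp
  have "ee j = (real j + 1)^j / real j ^ j" unfolding ee_def by (simp add: power_divide)
  also have "\<dots> \<le> (real j + 2)^(j+1) / (real j + 1)^(j+1)"
  proof -
    have "(real j + 1)^j * (real j + 1)^(j+1) \<le> (real j + 2)^(j+1) * real j ^ j"
    proof -
      have "(real j + 1)^j * (real j + 1)^(j+1) = (real j + 1)^(2*j+1)"
        by (simp add: power_add[symmetric] mult_2)
      thus ?thesis using h by (simp add: mult_ac)
    qed
    thus ?thesis using jp by (intro frac_le_helper) (simp_all add: mult_ac)
  qed
  also have "\<dots> = ee (Suc j)" unfolding ee_def by (simp add: power_divide add_ac)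
  finally show ?thesis .
qed

lemma ee_0: "ee 0 = 1" by (simp add: ee_def)
lemma ee_ge1: "ee j \<ge> 1"
  unfolding ee_def by (cases "j = 0") (auto intro!: one_le_power simp: field_simps)

lemma ee_mono: assumes "i \<le> j" shows "ee i \<le> ee j"
  using assms
proof (induction j)
  case 0 thus ?case by simp
next
  case (Suc j)
  show ?case
  proof (cases "i = Suc j")
    case True thus ?thesis by simp
  next
    case False
    hence "i \<le> j" using Suc by simp
    hence "ee i \<le> ee j" using Suc by simp
    moreover have "ee j \<le> ee (Suc j)"
      by (cases "j = 0") (simp_all add: ee_0 ee_ge1 ee_Suc)
    ultimately show ?thesis by simp
  qed
qed


definition aa :: "nat \<Rightarrow> nat \<Rightarrow> real" where
  "aa n m = real (n choose m) * real m ^ m * real (n - m) ^ (n - m) / real n ^ n"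

lemma prod_form:
  assumes "m \<le> j" "1 \<le> j"
  shows "(real m + 1) ^ m * real j ^ j \<le> real m ^ m * (real j + 1) ^ j"
proof (cases "m = 0")
  case True thus ?thesis by (simp add: power_mono)
next
  case False
  have "ee m \<le> ee j" using ee_mono[OF assms(1)] .
  hence "(real m + 1)^m / real m ^ m \<le> (real j + 1)^j / real j ^ j"
    unfolding ee_def by (simp add: power_divide)
  thus ?thesis using False assms by (simp add: divide_simps) (metis mult.commute)
qed

lemma aa_step:
  assumes "2 * (m + 1) \<le> n"
  shows "aa n (Suc m) \<le> aa n m"
proof -
  define j where "j = n - m - 1"
  have nm: "n - m = Suc j" and nm1: "n - Suc m = j" using assms unfolding j_def by auto
  have j1: "m + 1 \<le> j" using assms unfolding j_def by auto
  have bs: "real (n choose Suc m) * (real m + 1) = real (n choose m) * (real j + 1)"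
    using binom_step_real[of m n] assms nm by (simp add: of_nat_diff)
  have pf: "(real m + 1) ^ m * real j ^ j \<le> real m ^ m * (real j + 1) ^ j"
    by (rule prod_form) (use j1 in auto)
  have np: "real n ^ n > 0" using assms by simp
  have "aa n (Suc m) = real (n choose Suc m) * (real m + 1) * ((real m + 1) ^ m * real j ^ j) / real n ^ n"
    unfolding aa_def nm1 by (simp add: mult_ac add_ac)
  also have "\<dots> = real (n choose m) * (real j + 1) * ((real m + 1) ^ m * real j ^ j) / real n ^ n"
    using bs by simp
  also have "\<dots> \<le> real (n choose m) * (real j + 1) * (real m ^ m * (real j + 1) ^ j) / real n ^ n"
    by (intro divide_right_mono mult_left_mono pf) auto
  also have "\<dots> = aa n m"
    unfolding aa_def nm by (simp add: mult_ac add_ac)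
  finally show ?thesis .
qed

lemma aa_sym: assumes "m \<le> n" shows "aa n (n - m) = aa n m"
  unfolding aa_def using assms binomial_symmetric[OF assms] by (simp add: mult_ac)

lemma aa_nonneg: "aa n m \<ge> 0" unfolding aa_def by simp

lemma aa_mono_mid:
  assumes "m \<le> n div 2"
  shows "aa n (n div 2) \<le> aa n m"
proof -
  have "\<forall>m. m \<le> n div 2 \<longrightarrow> n div 2 - m = d \<longrightarrow> aa n (n div 2) \<le> aa n m" for d
  proof (induction d)
    case 0 thus ?case by auto
  next
    case (Suc d)
    show ?case
    proof (intro allI impI)
      fix m assume m: "m \<le> n div 2" "n div 2 - m = Suc d"
      hence "aa n (n div 2) \<le> aa n (Suc m)" using Suc.IH by auto
      also have "aa n (Suc m) \<le> aa n m" by (rule aa_step) (use m in auto)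
      finally show "aa n (n div 2) \<le> aa n m" .
    qed
  qed
  thus ?thesis using assms by blast
qed

lemma binom_central_step:
  "real (2*k+2 choose (k+1)) * (real k + 1) * (real k + 1) = real (2*k choose k) * (2*real k + 1) * (2*real k + 2)"
proof -
  have e1: "Suc (2*k+1) * (2*k+1 choose k) = (Suc (2*k+1) choose Suc k) * Suc k"
    by (rule Suc_times_binomial_eq)
  have e2: "Suc (2*k) * (2*k choose k) = (Suc (2*k) choose Suc k) * Suc k"
    by (rule Suc_times_binomial_eq)
  have e3: "(2*k+1 choose Suc k) = (2*k+1 choose k)"
    using binomial_symmetric[of "Suc k" "2*k+1"] by simp
  have r1: "real (2*k+2) * real (2*k+1 choose k) = real (2*k+2 choose (k+1)) * real (k+1)"
    using e1 by (metis Suc_eq_plus1 add_Suc_right of_nat_mult one_add_one add.assoc)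
  have r2: "real (2*k+1) * real (2*k choose k) = real (2*k+1 choose k) * real (k+1)"
    using e2 e3 by (metis Suc_eq_plus1 of_nat_mult)
  have "real (2*k+2 choose (k+1)) * (real k + 1) * (real k + 1) = real (2*k+2) * real (2*k+1 choose k) * (real k + 1)"
    using r1 by simp
  also have "\<dots> = real (2*k+2) * (real (2*k+1 choose k) * real (k+1))" by simp
  also have "\<dots> = real (2*k+2) * (real (2*k+1) * real (2*k choose k))" using r2 by simp
  finally show ?thesis by (simp add: algebra_simps)
qed

lemma central_even: "k \<ge> 1 \<Longrightarrow> (real (2*k choose k) / 4^k)^2 * (4 * real k) \<ge> 1"
proof (induction k rule: dec_induct)
  case base thus ?case by (simp add: power2_eq_square)
next
  case (step k)
  define c where "c = real (2*k choose k) / 4^k"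
  have kp: "real k \<ge> 1" using step by simp
  have cs: "real (2*(Suc k) choose Suc k) / 4^(Suc k) = c * ((2*real k + 1) / (2*real k + 2))"
  proof -
    define b1 where "b1 = real (2*(Suc k) choose Suc k)"
    define b0 where "b0 = real (2*k choose k)"
    have "2*(Suc k) = 2*k+2" "Suc k = k + 1" by simp_all
    hence rel: "b1 * (real k + 1) * (real k + 1) = b0 * (2*real k + 1) * (2*real k + 2)"
      using binom_central_step[of k] unfolding b1_def b0_def by metis
    have "(b1 * (real k + 1)) * (real k + 1) = (2 * b0 * (2*real k + 1)) * (real k + 1)"
      using rel by (simp add: algebra_simps)
    hence rel1: "b1 * (real k + 1) = 2 * b0 * (2*real k + 1)"
      by (metis mult_right_cancel add_nonneg_pos of_nat_0_le_iff zero_less_one less_irrefl)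
    have "b1 / 4^(Suc k) = b0 / 4^k * ((2*real k + 1) / (2*real k + 2))"
      apply (simp add: divide_simps)
      using rel1 by (simp add: algebra_simps)
    thus ?thesis unfolding c_def b1_def b0_def .
  qed
  have IH: "c^2 * (4 * real k) \<ge> 1" using step.IH unfolding c_def .
  have key: "(2*real k + 1)^2 * (real k + 1) \<ge> real k * (2*real k + 2)^2"
    by (simp add: power2_eq_square algebra_simps)
  have "(c * ((2*real k + 1) / (2*real k + 2)))^2 * (4 * real (Suc k))
      = (c^2 * (4 * real k)) * ((2*real k + 1)^2 * (real k + 1) / (real k * (2*real k + 2)^2))"
  proof -
    have k0: "real k \<noteq> 0" using kp by simp
    have "(c * ((2*real k + 1) / (2*real k + 2)))^2 * (4 * real (Suc k)) = c^2 * (2*real k + 1)^2 * (4 * (real k + 1)) / (2*real k + 2)^2"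
      by (simp add: power_divide power_mult_distrib)
    also have "\<dots> = (c^2 * (4 * real k)) * ((2*real k + 1)^2 * (real k + 1) / (real k * (2*real k + 2)^2))"
      using k0 by (simp add: divide_simps)
    finally show ?thesis .
  qed
  also have "\<dots> \<ge> 1 * 1"
    apply (rule mult_mono[OF IH])
    using key kp by (simp_all add: divide_simps)
  finally show ?case unfolding cs by simp
qed

lemma odd_aux: "(real (2*k) * real (2*k+2)) ^ (2*k) * real (2*k+2) \<ge> real (2*k+1) ^ (4*k+1)"
proof -
  define B where "B = real (2*k+1)"
  have B1: "B \<ge> 1" unfolding B_def by simp
  have AC: "real (2*k) * real (2*k+2) = B^2 - 1" unfolding B_def by (simp add: power2_eq_square algebra_simps)
  have Bern: "1 + real (2*k) * (- 1 / B^2) \<le> (1 + (- 1/B^2)) ^ (2*k)"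
    by (rule Bernoulli_inequality) (use B1 in \<open>simp add: field_simps\<close>)
  have r2k: "real (2*k) = B - 1" unfolding B_def by simp
  have "1 + real (2*k) * (- 1 / B^2) = (B^2 - B + 1) / B^2"
    unfolding r2k using B1 by (simp add: field_simps power2_eq_square)
  moreover have "1 + (- 1/B^2) = (B^2 - 1) / B^2" using B1 by (simp add: field_simps)
  ultimately have "(B^2 - B + 1) / B^2 \<le> (B^2 - 1)^(2*k) / (B^2)^(2*k)"
    using Bern by (simp add: power_divide)
  hence "(B^2 - B + 1) * (B^2)^(2*k) \<le> (B^2 - 1)^(2*k) * B^2"
    using B1 by (simp add: divide_simps)
  hence "(B^2 - B + 1) * (B + 1) * (B^2)^(2*k) \<le> (B^2 - 1)^(2*k) * (B + 1) * B^2"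
    using B1 by (simp add: mult_right_mono mult_ac)
  moreover have "(B^2 - B + 1) * (B + 1) \<ge> B^2 * B" by (simp add: power2_eq_square algebra_simps)
  ultimately have "B^2 * B * (B^2)^(2*k) \<le> (B^2 - 1)^(2*k) * (B + 1) * B^2"
    by (meson B1 order_trans mult_right_mono zero_le_power zero_le_power2)
  hence "B * (B^2)^(2*k) \<le> (B^2 - 1)^(2*k) * (B + 1)"
    using B1 by (simp add: mult_ac)
  moreover have "B * (B^2)^(2*k) = B^(4*k+1)"
    by (simp add: power_mult[symmetric] mult_ac)
  moreover have "B + 1 = real (2*k+2)" unfolding B_def by simp
  ultimately show ?thesis using AC unfolding B_def by simp
qed


lemma aa_even: assumes "k \<ge> 1" shows "aa (2*k) k = real (2*k choose k) / 4^k"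
proof -
  have "2*k - k = k" by simp
  hence "aa (2*k) k = real (2*k choose k) * (real k ^ k * real k ^ k) / real (2*k) ^ (2*k)"
    unfolding aa_def by (simp add: mult_ac)
  also have "real (2*k) ^ (2*k) = 4^k * (real k ^ k * real k ^ k)"
  proof -
    have "real (2*k) ^ (2*k) = 2^(2*k) * real k ^ (2*k)" by (simp add: power_mult_distrib)
    moreover have "(2::real)^(2*k) = 4^k" by (simp add: power_mult)
    moreover have "real k ^ (2*k) = real k ^ k * real k ^ k" by (simp only: mult_2 power_add)
    ultimately show ?thesis by simp
  qed
  finally show ?thesis using assms by simp
qed

lemma p4: "(4::real)^(k+1) = 2^k * 2^(k+1) * 2"
proof -
  have "(4::real)^(k+1) = 2^(2*(k+1))" by (simp add: power_mult)
  also have "(2::real)^k * 2^(k+1) * 2 = 2^(k+(k+1)+1)" by (simp add: power_add)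
  moreover have "k+(k+1)+1 = 2*(k+1)" by simp
  ultimately show ?thesis by simp
qed
lemma phi_aux: fixes A Q B :: real assumes "B > 0"
  shows "(A^k*Q^(k+1)/B^(2*k+1))^2 * B = (A*Q)^(2*k)*Q*Q/B^(4*k+1)"
proof -
  have "(A^k*Q^(k+1)/B^(2*k+1))^2 = (A^k)^2*(Q^(k+1))^2/(B^(2*k+1))^2"
    by (simp add: power_divide power_mult_distrib)
  also have "\<dots> = A^(2*k)*Q^(2*k+2)/B^(4*k+2)"
    by (simp only: power_mult[symmetric]) (simp add: mult.commute algebra_simps)
  finally have e: "(A^k*Q^(k+1)/B^(2*k+1))^2 = A^(2*k)*Q^(2*k+2)/B^(4*k+2)" .
  have "B^(4*k+2) = B^(4*k+1) * B" by simp
  moreover have "Q^(2*k+2) = Q^(2*k)*Q*Q" by (simp add: power_add power2_eq_square mult_ac)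
  moreover have "(A*Q)^(2*k) = A^(2*k)*Q^(2*k)" by (simp add: power_mult_distrib)
  ultimately show ?thesis unfolding e using assms by (simp add: field_simps)
qed

lemma gen2: fixes X uu vv a b D :: real assumes "uu > 0" "vv > 0" "c = a" "b = b'"
  shows "X * a * b / D = (2 * X / (uu * vv * 2)) * ((uu * c) * (vv * b') / D)"
  using assms by (simp add: field_simps)

lemma gen_aux: fixes a X Y :: real assumes "a \<ge> 0" "real (2*k+2) * X = Y * real (k+1)" "a = real k" shows "Y = 2 * X"
proof -
  have "(Y - 2 * X) * (real k + 1) = 0" using assms(2) by (simp add: algebra_simps)
  thus ?thesis by simp
qed

lemma aa_odd: "aa (2*k+1) k = (real (2*k+2 choose (k+1)) / 4^(k+1)) *
   (real (2*k)^k * real (2*k+2)^(k+1) / real (2*k+1)^(2*k+1))"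
proof -
  have e1: "Suc (2*k+1) * (2*k+1 choose k) = (Suc (2*k+1) choose Suc k) * Suc k"
    by (rule Suc_times_binomial_eq)
  have "real (2*k+2) * real (2*k+1 choose k) = real (2*k+2 choose (k+1)) * real (k+1)"
  proof -
    have "Suc (2*k+1) = 2*k+2" "Suc k = k+1" by simp_all
    hence e1': "(2*k+2) * (2*k+1 choose k) = (2*k+2 choose (k+1)) * (k+1)" using e1 by (simp only:)
    show ?thesis by (simp only: of_nat_mult[symmetric] e1')
  qed
  hence b: "real (2*k+2 choose (k+1)) = 2 * real (2*k+1 choose k)"
    by (intro gen_aux[of "real k"]) simp_all
  have d: "2*k+1-k = k+1" by simp
  have p1: "real (2*k)^k = 2^k * real k ^ k" by (simp add: power_mult_distrib)
  have p2: "real (2*k+2)^(k+1) = 2^(k+1) * (real k + 1) ^ (k+1)"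
  proof -
    have "real (2*k+2) = 2 * (real k + 1)" by simp
    thus ?thesis by (simp only: power_mult_distrib)
  qed
  have p4: "(4::real)^(k+1) = 2^k * 2^(k+1) * 2" by (rule p4)
  have "real (k+1) = real k + 1" by simp
  thus ?thesis unfolding aa_def d b p1 p2 p4
    by (intro gen2) (simp_all add: add.commute)
qed

lemma aa_main:
  assumes "n \<ge> 1" "m \<le> n"
  shows "(aa n m)^2 * (2 * real n) \<ge> 1"
proof -
  obtain m' where m': "m' \<le> n div 2" "aa n m' = aa n m"
  proof (cases "m \<le> n div 2")
    case True thus ?thesis using that by blast
  next
    case False
    hence "n - m \<le> n div 2" by auto
    thus ?thesis using that aa_sym[OF assms(2)] by blast
  qed
  have le: "aa n (n div 2) \<le> aa n m" using aa_mono_mid[OF m'(1)] m'(2) by simp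
  have main: "(aa n (n div 2))^2 * (2 * real n) \<ge> 1"
  proof (cases "even n")
    case True
    then obtain k where k: "n = 2*k" by blast
    hence k1: "k \<ge> 1" using assms by simp
    have nd: "n div 2 = k" using k by simp
    have n2: "2 * real n = 4 * real k" using k by simp
    have "aa n (n div 2) = real (2*k choose k) / 4^k" unfolding nd unfolding k by (rule aa_even[OF k1])
    thus ?thesis unfolding n2 using central_even[OF k1] by (simp only:)
  next
    case False
    then obtain k where k: "n = 2*k+1" using oddE by blast
    have nd: "n div 2 = k" using k by simp
    define c where "c = real (2*k+2 choose (k+1)) / 4^(k+1)"
    define phi where "phi = real (2*k)^k * real (2*k+2)^(k+1) / real (2*k+1)^(2*k+1)"
    have c1: "c^2 * (4 * real (k+1)) \<ge> 1"
    proof -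
      have "(real (2*(k+1) choose (k+1)) / 4^(k+1))^2 * (4 * real (k+1)) \<ge> 1" by (rule central_even) simp
      moreover have "2*(k+1) = 2*k+2" by simp
      ultimately show ?thesis unfolding c_def by (simp only:)
    qed
    have aak: "aa n k = c * phi" unfolding k c_def phi_def by (rule aa_odd)
    have od: "(real (2*k) * real (2*k+2)) ^ (2*k) * real (2*k+2) \<ge> real (2*k+1) ^ (4*k+1)"
      by (rule odd_aux)
    have phi2: "phi^2 * real (2*k+1) \<ge> real (2*k+2)"
    proof -
      have pos: "real (2*k+1) ^ (4*k+2) > 0" by simp
      have "phi^2 * real (2*k+1) = (real (2*k) * real (2*k+2)) ^ (2*k) * real (2*k+2) * real (2*k+2) / real (2*k+1) ^ (4*k+1)"
        unfolding phi_def by (rule phi_aux) simp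
      also have "\<dots> \<ge> real (2*k+1) ^ (4*k+1) * real (2*k+2) / real (2*k+1) ^ (4*k+1)"
        by (intro divide_right_mono mult_right_mono od) auto
      also have "real (2*k+1) ^ (4*k+1) * real (2*k+2) / real (2*k+1) ^ (4*k+1) = real (2*k+2)" by simp
      finally show ?thesis .
    qed
    have "(aa n (n div 2))^2 * (2 * real n) = (c^2 * (4 * real (k+1))) * ((phi^2 * real (2*k+1)) / real (2*k+2))"
      unfolding nd aak unfolding k by (simp add: field_simps power2_eq_square)
    also have "\<dots> \<ge> 1 * 1"
      apply (rule mult_mono[OF c1])
      using phi2 by (simp_all add: divide_simps)
    finally show ?thesis by simp
  qed
  have "(aa n (n div 2))^2 \<le> (aa n m)^2"
    using le aa_nonneg by (simp add: power_mono)
  hence "(aa n (n div 2))^2 * (2 * real n) \<le> (aa n m)^2 * (2 * real n)"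
    by (simp add: mult_right_mono)
  thus ?thesis using main by simp
qed


definition Hn :: "real \<Rightarrow> real" where "Hn x = - x * ln x - (1 - x) * ln (1 - x)"

lemma Hn_deriv: assumes "0 < t" "t < 1"
  shows "(Hn has_real_derivative (ln (1 - t) - ln t)) (at t)"
proof -
  have "((\<lambda>x. - x * ln x - (1 - x) * ln (1 - x)) has_real_derivative
        (- (1 * ln t + t * (1 / t)) - ((- 1) * ln (1 - t) + (1 - t) * ((- 1) / (1 - t))))) (at t)"
    using assms by (auto intro!: derivative_eq_intros)
  moreover have "- (1 * ln t + t * (1 / t)) - ((- 1) * ln (1 - t) + (1 - t) * ((- 1) / (1 - t))) = ln (1 - t) - ln t"
    using assms by (simp add: field_simps)
  ultimately show ?thesis unfolding Hn_def[abs_def] by simp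
qed

lemma Hn_0: "Hn 0 = 0" by (simp add: Hn_def)

lemma Hn_sym: "Hn (1 - x) = Hn x" by (simp add: Hn_def algebra_simps)

lemma Hn_lim0: "(Hn \<longlongrightarrow> 0) (at_right 0)"
  unfolding Hn_def[abs_def] by real_asymp

lemma Hn_cont: assumes "b < 1" "0 < b" shows "continuous_on {0..b} Hn"
proof -
  show ?thesis unfolding continuous_on_eq_continuous_within
  proof
    fix x assume x: "x \<in> {0..b}"
    show "continuous (at x within {0..b}) Hn"
    proof (cases "x = 0")
      case True
      have "at x within {0..b} = at_right 0" using \<open>0 < b\<close> True by (simp add: at_within_Icc_at_right)
      thus ?thesis unfolding continuous_within using True Hn_0 Hn_lim0 by simp
    next
      case False
      hence "0 < x" "x < 1" using x assms by auto
      hence "isCont Hn x" using Hn_deriv DERIV_isCont by blast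
      thus ?thesis by (simp add: continuous_at_imp_continuous_at_within)
    qed
  qed
qed

lemma g_mono:
  fixes q t1 t2 :: real
  assumes q: "q \<ge> 2" and t: "0 < t1" "t1 \<le> t2" "t2 \<le> (q - 1) / q"
  shows "Hn t1 + t1 * ln (q - 1) \<le> Hn t2 + t2 * ln (q - 1)"
proof -
  have r1: "(q - 1) / q < 1" using q by simp
  show ?thesis
  proof (rule DERIV_nonneg_imp_nondecreasing[of t1 t2 "\<lambda>t. Hn t + t * ln (q - 1)"])
    show "t1 \<le> t2" by fact
  next
    fix x assume x: "t1 \<le> x" "x \<le> t2"
    hence x01: "0 < x" "x < 1" using t r1 by auto
    have d: "((\<lambda>t. Hn t + t * ln (q - 1)) has_real_derivative (ln (1 - x) - ln x + 1 * ln (q - 1))) (at x)"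
      by (rule DERIV_add[OF Hn_deriv[OF x01] DERIV_cmult_right[OF DERIV_ident]])
    have "q * x \<le> q * t2" using x q by (intro mult_left_mono) auto
    moreover have "q * t2 \<le> q - 1" using t q by (simp add: field_simps)
    ultimately have "x * q \<le> q - 1" by (simp add: mult.commute)
    hence "x \<le> (1 - x) * (q - 1)" by (simp add: algebra_simps)
    hence "ln x \<le> ln ((1 - x) * (q - 1))" using x01 q by simp
    also have "\<dots> = ln (1 - x) + ln (q - 1)" using x01 q by (simp add: ln_mult)
    finally have "0 \<le> ln (1 - x) - ln x + 1 * ln (q - 1)" by simp
    thus "\<exists>y. ((\<lambda>t. Hn t + t * ln (q - 1)) has_real_derivative y) (at x) \<and> 0 \<le> y"
      using d by blast
  qed
qed

lemma key_num: fixes q :: real assumes "q \<ge> 2" shows "(q - 1) * ln (q + 1) \<le> q * ln q"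
proof -
  have "ln (1 + 1/q) \<le> 1/q" using assms by (intro ln_add_one_self_le_self) simp
  moreover have "ln (1 + 1/q) = ln (q + 1) - ln q"
  proof -
    have "1 + 1/q = (q+1)/q" using assms by (simp add: field_simps)
    thus ?thesis using assms by (simp add: ln_div)
  qed
  ultimately have "ln (q + 1) - ln q \<le> 1/q" by simp
  hence "q * (ln (q + 1) - ln q) \<le> q * (1/q)" using assms by (intro mult_left_mono) auto
  hence a: "q * (ln (q + 1) - ln q) \<le> 1" using assms by simp
  have "1 \<le> ln (3::real)" using exp_le by (simp add: ln_ge_iff)
  also have "ln 3 \<le> ln (q + 1)" using assms by simp
  finally show ?thesis using a by (simp add: algebra_simps)
qed

lemma Hn_inv: fixes q :: real assumes "q \<ge> 2"
  shows "Hn (1/q) = ln q - (q - 1) / q * ln (q - 1)"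
proof -
  have "1 - 1/q = (q - 1) / q" using assms by (simp add: field_simps)
  hence "Hn (1/q) = - (1/q) * ln (1/q) - (q - 1) / q * ln ((q - 1) / q)" by (simp add: Hn_def)
  also have "\<dots> = (1/q) * ln q - (q - 1) / q * (ln (q - 1) - ln q)"
    using assms by (simp add: ln_div)
  also have "\<dots> = ln q - (q - 1) / q * ln (q - 1)" using assms by (simp add: field_simps)
  finally show ?thesis .
qed


lemma Hn_chain [derivative_intros]:
  assumes "(g has_real_derivative g') (at x)" "0 < g x" "g x < 1"
    "D = (ln (1 - g x) - ln (g x)) * g'"
  shows "((\<lambda>x. Hn (g x)) has_real_derivative D) (at x)"
  using DERIV_chain2[OF Hn_deriv[OF assms(2,3)] assms(1)] assms(4) by simp

lemma S_mono:
  fixes r a1 a2 :: real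
  assumes r: "0 < r" "r < 1" and a: "0 < a1" "a1 \<le> a2" "a2 \<le> r/2"
  shows "ln (1 - a2) + ln (1 - r + a2) - ln a2 - ln (r - a2) \<le> ln (1 - a1) + ln (1 - r + a1) - ln a1 - ln (r - a1)"
proof -
  define P1 where "P1 = a1 * (r - a1)"
  define P2 where "P2 = a2 * (r - a2)"
  have P1p: "P1 > 0" unfolding P1_def using r a by simp
  have P12: "P1 \<le> P2"
  proof -
    have "P2 - P1 = (a2 - a1) * (r - a1 - a2)" unfolding P1_def P2_def by (simp add: algebra_simps)
    moreover have "(a2 - a1) * (r - a1 - a2) \<ge> 0" using a by (intro mult_nonneg_nonneg) auto
    ultimately show ?thesis by simp
  qed
  have e: "ln (1 - a) + ln (1 - r + a) - ln a - ln (r - a) = ln (1 - r + a * (r - a)) - ln (a * (r - a))"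
    if "0 < a" "a \<le> r/2" for a
  proof -
    have pos: "1 - a > 0" "1 - r + a > 0" "r - a > 0" using that r by auto
    have eq: "(1 - a) * (1 - r + a) = 1 - r + a * (r - a)" by (simp add: algebra_simps)
    have "ln (1 - r + a * (r - a)) = ln ((1 - a) * (1 - r + a))" by (simp only: eq)
    also have "\<dots> = ln (1 - a) + ln (1 - r + a)" using pos by (simp add: ln_mult)
    finally have "ln (1 - r + a * (r - a)) = ln (1 - a) + ln (1 - r + a)" .
    moreover have "ln (a * (r - a)) = ln a + ln (r - a)" using pos that by (simp add: ln_mult)
    ultimately show ?thesis by simp
  qed
  have "ln (1 - r + P2) - ln P2 = ln ((1 - r + P2) / P2)" using P1p P12 r by (simp add: ln_div)
  also have "\<dots> \<le> ln ((1 - r + P1) / P1)"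
  proof -
    have "(1 - r) / P2 \<le> (1 - r) / P1" using P1p P12 r by (intro divide_left_mono) auto
    hence "(1 - r + P2) / P2 \<le> (1 - r + P1) / P1" using P1p P12 by (simp add: add_divide_distrib)
    moreover have "(1 - r + P2) / P2 > 0" using P1p P12 r by simp
    ultimately show ?thesis by simp
  qed
  also have "\<dots> = ln (1 - r + P1) - ln P1" using P1p r by (simp add: ln_div)
  finally show ?thesis unfolding P1_def P2_def using e[of a1] e[of a2] a by simp
qed


lemma u_dec:
  fixes q x1 x2 :: real
  assumes q: "q \<ge> 2" and x: "1/2 \<le> x1" "x1 \<le> x2" "x2 \<le> 1"
  shows "Hn ((q-1)/q * x2) - x2 * Hn (1/q) \<le> Hn ((q-1)/q * x1) - x1 * Hn (1/q)"
proof -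
  define r where "r = (q-1)/q"
  define c where "c = Hn (1/q)"
  have r: "0 < r" "r < 1" unfolding r_def using q by auto
  have rq: "1 - r/2 = (q+1)/(2*q)" "r/2 = (q-1)/(2*q)" unfolding r_def using q by (auto simp: field_simps)
  have cdef: "c = ln q - r * ln (q - 1)" unfolding c_def r_def using Hn_inv[OF q] by simp
  show ?thesis unfolding r_def[symmetric] c_def[symmetric]
  proof (rule DERIV_nonpos_imp_nonincreasing[of x1 x2 "\<lambda>x. Hn (r * x) - x * c"])
    show "x1 \<le> x2" by fact
  next
    fix x assume xx: "x1 \<le> x" "x \<le> x2"
    have a: "r/2 \<le> r*x" "r * x \<le> r" using xx x r by (auto intro: mult_left_mono)
    have a01: "0 < r * x" "r * x < 1" using a r by (auto intro: le_less_trans[OF a(2)])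
    have d: "((\<lambda>x. Hn (r * x) - x * c) has_real_derivative ((ln (1 - r*x) - ln (r*x)) * r - c)) (at x)"
      using a01 by (auto intro!: derivative_eq_intros)
    have "ln (1 - r*x) \<le> ln (1 - r/2)" using a a01 r by simp
    moreover have "ln (r/2) \<le> ln (r*x)" using a r by simp
    ultimately have "ln (1 - r*x) - ln (r*x) \<le> ln (1 - r/2) - ln (r/2)" by simp
    also have "\<dots> = ln (q+1) - ln (q-1)" unfolding rq(1) unfolding rq(2) using q by (simp add: ln_div)
    finally have "(ln (1 - r*x) - ln (r*x)) * r \<le> (ln (q+1) - ln (q-1)) * r"
      using r by (intro mult_right_mono) auto
    moreover have "(ln (q+1) - ln (q-1)) * r - c = r * ln (q+1) - ln q" unfolding cdef by (simp add: algebra_simps)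
    moreover have "r * ln (q+1) \<le> ln q"
    proof -
      have "(q - 1) * ln (q + 1) \<le> q * ln q" by (rule key_num[OF q])
      hence "(q - 1) * ln (q + 1) / q \<le> q * ln q / q" using q by (intro divide_right_mono) auto
      thus ?thesis unfolding r_def using q by simp
    qed
    ultimately have "(ln (1 - r*x) - ln (r*x)) * r - c \<le> 0" by linarith
    thus "\<exists>y. ((\<lambda>x. Hn (r * x) - x * c) has_real_derivative y) (at x) \<and> y \<le> 0" using d by blast
  qed
qed

lemma D_nonneg:
  fixes q x :: real
  assumes q: "q \<ge> 2" and x: "0 \<le> x" "x \<le> 1/2"
  shows "Hn ((q-1)/q * (1 - x)) - (1 - x) * Hn (1/q) \<le> Hn ((q-1)/q * x) - x * Hn (1/q)"
proof -
  define r where "r = (q-1)/q"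
  define c where "c = Hn (1/q)"
  have r: "0 < r" "r < 1" unfolding r_def using q by auto
  define D where "D = (\<lambda>x. Hn (r * x) - x * c - (Hn (r * (1 - x)) - (1 - x) * c))"
  define D' where "D' = (\<lambda>x. (ln (1 - r*x) - ln (r*x)) * r + (ln (1 - r*(1-x)) - ln (r*(1-x))) * r - 2 * c)"
  have D0: "D 0 = 0"
  proof -
    have "Hn r = c" unfolding c_def r_def using q Hn_sym[of "1/q"] by (simp add: field_simps)
    thus ?thesis unfolding D_def by (simp add: Hn_0)
  qed
  have Dh: "D (1/2) = 0" unfolding D_def by simp
  have Dd: "(D has_real_derivative D' y) (at y)" if "0 < y" "y < 1/2" for y
  proof -
    have h1: "r * y \<le> r" "r * (1 - y) \<le> r" using that r by (simp_all add: mult_le_cancel_left1)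
    have "0 < r * y" "0 < r * (1 - y)" using that r by auto
    moreover have "r * y < 1" "r * (1 - y) < 1" using le_less_trans[OF h1(1) r(2)] le_less_trans[OF h1(2) r(2)] .
    ultimately have "0 < r * y" "r * y < 1" "0 < r * (1 - y)" "r * (1 - y) < 1" by auto
    thus ?thesis unfolding D_def D'_def
      by (auto intro!: derivative_eq_intros simp: algebra_simps)
  qed
  have D'mono: "D' y2 \<le> D' y1" if "0 < y1" "y1 \<le> y2" "y2 \<le> 1/2" for y1 y2
  proof -
    have S: "ln (1 - r*y2) + ln (1 - r + r*y2) - ln (r*y2) - ln (r - r*y2) \<le> ln (1 - r*y1) + ln (1 - r + r*y1) - ln (r*y1) - ln (r - r*y1)"
      using r that by (intro S_mono) (auto intro: mult_left_mono)
    have "1 - r*(1-y) = 1 - r + r*y" "r*(1-y) = r - r*y" for y by (simp_all add: algebra_simps)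
    hence "D' y = (ln (1 - r*y) + ln (1 - r + r*y) - ln (r*y) - ln (r - r*y)) * r - 2 * c" for y
      unfolding D'_def by (simp add: algebra_simps)
    thus ?thesis using S r by (simp add: mult_right_mono)
  qed
  have Dcont: "continuous_on {0..1/2} D"
  proof -
    have c1: "continuous_on {0..1/2} (\<lambda>x. Hn (r * x))"
    proof (rule continuous_on_compose2[OF Hn_cont[of "r/2"]])
      show "r/2 < 1" "0 < r/2" using r by auto
      show "continuous_on {0..1/2} ((*) r)" by (intro continuous_intros)
      show "(*) r ` {0..1/2} \<subseteq> {0..r/2}" using r by (auto intro: mult_left_mono)
    qed
    have c2: "continuous_on {0..1/2} (\<lambda>x. Hn (r * (1 - x)))"
    proof (rule continuous_on_compose2[OF Hn_cont[of "r"]])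
      show "r < 1" "0 < r" using r by auto
      show "continuous_on {0..1/2} (\<lambda>x. r * (1 - x))" by (intro continuous_intros)
      show "(\<lambda>x. r * (1 - x)) ` {0..1/2} \<subseteq> {0..r}" using r by (auto simp: mult_le_cancel_left1)
    qed
    show ?thesis unfolding D_def by (intro continuous_intros c1 c2)
  qed
  have "D x \<ge> 0"
  proof (rule ccontr)
    assume neg: "\<not> D x \<ge> 0"
    hence x0: "0 < x" "x < 1/2" using x D0 Dh by (cases "x = 0"; cases "x = 1/2"; auto)+
    have diff: "D differentiable (at y)" if "0 < y" "y < 1/2" for y
      unfolding real_differentiable_def using Dd[OF that] by blast
    have cont1: "continuous_on {0..x} D" by (rule continuous_on_subset[OF Dcont]) (use x0 in auto)
    have cont2: "continuous_on {x..1/2} D" by (rule continuous_on_subset[OF Dcont]) (use x0 in auto)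
    have diff1: "D differentiable (at y)" if "0 < y" "y < x" for y using diff that x0 by simp
    have diff2: "D differentiable (at y)" if "x < y" "y < 1/2" for y using diff that x0 by simp
    obtain l1 z1 where z1: "0 < z1" "z1 < x" "(D has_real_derivative l1) (at z1)" "D x - D 0 = (x - 0) * l1"
      using MVT[OF x0(1) cont1 diff1] by blast
    obtain l2 z2 where z2: "x < z2" "z2 < 1/2" "(D has_real_derivative l2) (at z2)" "D (1/2) - D x = (1/2 - x) * l2"
      using MVT[OF x0(2) cont2 diff2] by blast
    have l1: "l1 = D' z1" using DERIV_unique[OF z1(3) Dd[of z1]] z1 x0 by simp
    have l2: "l2 = D' z2" using DERIV_unique[OF z2(3) Dd[of z2]] z2 x0 by simp
    have "l1 < 0"
    proof -
      have "x * l1 < 0" using z1(4) D0 neg by simp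
      thus ?thesis using x0 by (simp add: mult_less_0_iff)
    qed
    moreover have "l2 > 0"
    proof -
      have "(1/2 - x) * l2 > 0" using z2(4) Dh neg by simp
      thus ?thesis using x0 by (simp add: zero_less_mult_iff)
    qed
    moreover have "D' z2 \<le> D' z1" using D'mono[of z1 z2] z1 z2 by simp
    ultimately show False using l1 l2 by simp
  qed
  thus ?thesis unfolding D_def r_def c_def by simp
qed


lemma binom_ln_bound:
  assumes "0 < m" "m < n"
  shows "ln (real (n choose m)) \<ge> real n * Hn (real m / real n) - ln (2 * real n) / 2"
proof -
  have n1: "n \<ge> 1" using assms by simp
  have am: "(aa n m)^2 * (2 * real n) \<ge> 1" using aa_main[OF n1] assms by simp
  have mp: "real m > 0" "real (n - m) > 0" "real n > 0" using assms by auto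
  have bp: "real (n choose m) > 0" using assms by simp
  have aapos: "aa n m > 0" unfolding aa_def using mp bp by simp
  have lnaa: "ln (aa n m) = ln (real (n choose m)) + real m * ln (real m) + real (n - m) * ln (real (n - m)) - real n * ln (real n)"
    unfolding aa_def using mp bp by (simp add: ln_mult ln_div ln_realpow)
  have nH: "real n * Hn (real m / real n) = real n * ln (real n) - real m * ln (real m) - real (n - m) * ln (real (n - m))"
  proof -
    have e1: "1 - real m / real n = real (n - m) / real n" using mp assms by (simp add: field_simps of_nat_diff)
    have "real n * Hn (real m / real n) = - real m * ln (real m / real n) - real (n - m) * ln (real (n - m) / real n)"
      unfolding Hn_def e1 using mp by (simp add: field_simps)
    also have "\<dots> = real n * ln (real n) - real m * ln (real m) - real (n - m) * ln (real (n - m))"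
      using mp assms by (simp add: ln_div algebra_simps of_nat_diff)
    finally show ?thesis .
  qed
  have "0 \<le> ln ((aa n m)^2 * (2 * real n))" using am by simp
  also have "\<dots> = 2 * ln (aa n m) + ln (2 * real n)" using aapos mp by (simp add: ln_mult ln_realpow)
  finally have "ln (aa n m) \<ge> - ln (2 * real n) / 2" by simp
  thus ?thesis using lnaa nH by simp
qed

lemma bin_entropy_Hn: "bin_entropy x = Hn x / ln 2"
  unfolding bin_entropy_def Hn_def log_def by (simp add: field_simps)

lemma analytic_main:
  fixes q n s w :: nat and \<epsilon> :: real
  assumes q: "q \<ge> 2" and s: "1 \<le> s" "s < n" and e: "0 < \<epsilon>" "\<epsilon> \<le> 1/2"
    and es: "\<epsilon> * real n \<le> real s" "real s \<le> (1 - \<epsilon>) * real n"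
    and w1: "(real q - 1) / real q * real s \<le> real w"
    and w2: "real w * real q \<le> (real q - 1) * (real s + 1)"
  shows "1 / sqrt (2 * real n) * 2 powr (eta q \<epsilon> * real n) \<le> real (n choose w) * (real q - 1) ^ w / real q ^ s"
proof -
  define Q where "Q = real q"
  define r where "r = (Q - 1) / Q"
  have Q2: "Q \<ge> 2" unfolding Q_def using q by simp
  have r: "0 < r" "r < 1" unfolding r_def using Q2 by auto
  have np: "real n > 0" using s by simp
  have wpos: "0 < w"
  proof -
    have "0 < r * real s" using r s by simp
    thus ?thesis using w1 unfolding r_def Q_def by simp
  qed
  have wrn: "real w \<le> r * real n"
  proof -
    have "real s + 1 \<le> real n" using s by simp
    hence "real w * Q \<le> (Q - 1) * real n" using w2 Q2 unfolding Q_def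
      by (smt (verit) mult_left_mono)
    thus ?thesis unfolding r_def using Q2 by (simp add: field_simps)
  qed
  have wn: "w < n"
  proof -
    have "r * real n < real n" using r np by simp
    thus ?thesis using wrn by linarith
  qed
  have st1: "ln (real (n choose w)) \<ge> real n * Hn (real w / real n) - ln (2 * real n) / 2"
    by (rule binom_ln_bound[OF wpos wn])
  have st2: "Hn (r * (real s / real n)) + r * (real s / real n) * ln (Q - 1) \<le> Hn (real w / real n) + real w / real n * ln (Q - 1)"
  proof (rule g_mono[OF Q2])
    show "0 < r * (real s / real n)" using r s np by simp
    have "r * real s \<le> real w" using w1 unfolding r_def Q_def .
    hence "r * real s / real n \<le> real w / real n" using np by (simp add: divide_right_mono)
    thus "r * (real s / real n) \<le> real w / real n" by simp
    show "real w / real n \<le> (Q - 1) / Q" using wrn np unfolding r_def by (simp add: field_simps)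
  qed
  define x where "x = real s / real n"
  have x: "\<epsilon> \<le> x" "x \<le> 1 - \<epsilon>" unfolding x_def using es np by (simp_all add: field_simps)
  have st3: "Hn (r * (1 - \<epsilon>)) - (1 - \<epsilon>) * Hn (1/Q) \<le> Hn (r * x) - x * Hn (1/Q)"
  proof (cases "x \<ge> 1/2")
    case True
    show ?thesis unfolding r_def using u_dec[OF Q2 True x(2)] e by simp
  next
    case False
    have "Hn (r * (1 - \<epsilon>)) - (1 - \<epsilon>) * Hn (1/Q) \<le> Hn (r * (1 - x)) - (1 - x) * Hn (1/Q)"
      unfolding r_def using u_dec[OF Q2, of "1 - x" "1 - \<epsilon>"] False x e by simp
    also have "\<dots> \<le> Hn (r * x) - x * Hn (1/Q)"
      unfolding r_def using D_nonneg[OF Q2, of x] False x e by simp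
    finally show ?thesis .
  qed
  have cH: "Hn (1/Q) = ln Q - r * ln (Q - 1)" unfolding r_def using Hn_inv[OF Q2] by simp
  define LHS where "LHS = real (n choose w) * (real q - 1) ^ w / real q ^ s"
  have bpos: "real (n choose w) > 0" using wn by simp
  have Lpos: "LHS > 0" unfolding LHS_def using bpos q by simp
  have lnL: "ln LHS = ln (real (n choose w)) + real w * ln (Q - 1) - real s * ln Q"
    unfolding LHS_def Q_def using bpos q by (simp add: ln_mult ln_div ln_realpow)
  have "ln LHS \<ge> real n * (Hn (real w / real n) + real w / real n * ln (Q - 1)) - real s * ln Q - ln (2 * real n) / 2"
    using lnL st1 np by (simp add: algebra_simps)
  moreover have "real n * (Hn (r * x) + r * x * ln (Q - 1)) - real s * ln Q = real n * (Hn (r * x) - x * Hn (1/Q))"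
    unfolding cH x_def using np by (simp add: algebra_simps)
  ultimately have A: "ln LHS \<ge> real n * (Hn (r * x) - x * Hn (1/Q)) - ln (2 * real n) / 2"
    using st2 np unfolding x_def by (smt (verit) mult_left_mono)
  have B: "real n * (Hn (r * (1 - \<epsilon>)) - (1 - \<epsilon>) * Hn (1/Q)) \<le> real n * (Hn (r * x) - x * Hn (1/Q))"
    using st3 np by (intro mult_left_mono) auto
  have etaeq: "eta q \<epsilon> * ln 2 = Hn (r * (1 - \<epsilon>)) - (1 - \<epsilon>) * Hn (1/Q)"
    unfolding eta_def bin_entropy_Hn r_def Q_def by (simp add: field_simps)
  have C: "eta q \<epsilon> * real n * ln 2 = real n * (Hn (r * (1 - \<epsilon>)) - (1 - \<epsilon>) * Hn (1/Q))"
    unfolding etaeq[symmetric] by (simp add: mult_ac)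
  have main: "ln LHS \<ge> eta q \<epsilon> * real n * ln 2 - ln (2 * real n) / 2"
    using A B C by linarith
  define RHS where "RHS = 1 / sqrt (2 * real n) * 2 powr (eta q \<epsilon> * real n)"
  have Rpos: "RHS > 0" unfolding RHS_def using np by simp
  have lnR: "ln RHS = eta q \<epsilon> * real n * ln 2 - ln (2 * real n) / 2"
    unfolding RHS_def using np by (simp add: ln_mult ln_div ln_powr ln_sqrt)
  have "ln RHS \<le> ln LHS" using main lnR by simp
  hence "RHS \<le> LHS" using Rpos Lpos by simp
  thus ?thesis unfolding RHS_def LHS_def .
qed


lemma card_subspace_ge:
  fixes C :: "('a::{finite,field} ^ 'n) set"
  assumes lin: "vec.subspace C"
  shows "CARD('a) ^ vec.dim C \<le> card C"
proof -
  obtain B where B: "B \<subseteq> C" "vec.independent B" "C \<subseteq> vec.span B" "card B = vec.dim C"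
    using vec.basis_exists by blast
  have finB: "finite B" using B(2) vec.independent_explicit by blast
  define phi where "phi = (\<lambda>g. \<Sum>b\<in>B. g b *s b)"
  have inC: "phi g \<in> C" for g
  proof -
    have "phi g \<in> vec.span B" unfolding phi_def
      by (intro vec.span_sum vec.span_scale vec.span_base)
    thus ?thesis using vec.span_minimal[OF B(1) lin] by blast
  qed
  have inj: "inj_on phi (B \<rightarrow>\<^sub>E (UNIV :: 'a set))"
  proof (rule inj_onI)
    fix g g' assume g: "g \<in> B \<rightarrow>\<^sub>E UNIV" "g' \<in> B \<rightarrow>\<^sub>E UNIV" and eq: "phi g = phi g'"
    have "(\<Sum>b\<in>B. (g b - g' b) *s b) = phi g - phi g'"
      unfolding phi_def by (simp add: vec.scale_left_diff_distrib sum_subtractf)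
    also have "\<dots> = 0" using eq by simp
    finally have z: "(\<Sum>b\<in>B. (\<lambda>b. g b - g' b) b *s b) = 0" by simp
    have ind: "\<forall>c. (\<Sum>v\<in>B. c v *s v) = 0 \<longrightarrow> (\<forall>v\<in>B. c v = 0)"
      using B(2) vec.independent_explicit by blast
    have "\<forall>b\<in>B. g b - g' b = 0" using ind[rule_format, OF z] by simp
    thus "g = g'" using g by (intro PiE_ext) auto
  qed
  have e1: "card (B \<rightarrow>\<^sub>E (UNIV :: 'a set)) = CARD('a) ^ card B"
    using finB by (simp add: card_PiE)
  have e2: "card (phi ` (B \<rightarrow>\<^sub>E UNIV)) = card (B \<rightarrow>\<^sub>E (UNIV :: 'a set))"
    using card_image[OF inj] by simp
  have e3: "card (phi ` (B \<rightarrow>\<^sub>E UNIV)) \<le> card C" using inC by (intro card_mono) auto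
  show ?thesis using e1 e2 e3 B(4) by simp
qed

lemma exists_low_weight:
  fixes C :: "('a::{finite,field} ^ 'n) set"
  assumes lin: "vec.subspace C" and dimC: "vec.dim C = k" and k1: "1 \<le> k" and kn: "k \<le> CARD('n)"
    and notMDS: "\<not> is_MDS C"
  shows "\<exists>c\<in>C. c \<noteq> 0 \<and> card {i. c $ i \<noteq> 0} \<le> CARD('n) - k"
proof -
  have "k - 1 \<le> card (UNIV :: 'n set)" using kn by simp
  then obtain I :: "'n set" where I: "card I = k - 1"
    using obtain_subset_with_card_n[of "k - 1" "UNIV :: 'n set"] by metis
  have finI: "finite I" by simp
  define pr where "pr = (\<lambda>c :: 'a^'n. restrict (\<lambda>i. c $ i) I)"
  have q2: "CARD('a) \<ge> 2"
  proof -
    have "card {0 :: 'a, 1} = 2" by simp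
    moreover have "card {0 :: 'a, 1} \<le> CARD('a)" by (intro card_mono) auto
    ultimately show ?thesis by simp
  qed
  have "card (pr ` C) \<le> card (I \<rightarrow>\<^sub>E (UNIV :: 'a set))"
    unfolding pr_def by (intro card_mono) auto
  also have "\<dots> = CARD('a) ^ (k - 1)" using finI I by (simp add: card_PiE)
  also have "\<dots> < CARD('a) ^ k" using q2 k1 by (intro power_strict_increasing) auto
  also have "\<dots> \<le> card C" using card_subspace_ge[OF lin] dimC by simp
  finally have "card (pr ` C) < card C" .
  hence "\<not> inj_on pr C" using card_image by fastforce
  then obtain x y where xy: "x \<in> C" "y \<in> C" "x \<noteq> y" "pr x = pr y" unfolding inj_on_def by blast
  have agree: "x $ i = y $ i" if "i \<in> I" for i
    using fun_cong[OF xy(4), of i] that unfolding pr_def by simp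
  define S where "S = {hamming_dist x y | x y. x \<in> C \<and> y \<in> C \<and> x \<noteq> y}"
  have hxy: "hamming_dist x y \<le> CARD('n) - (k - 1)"
  proof -
    have "{i. x $ i \<noteq> y $ i} \<subseteq> UNIV - I" using agree by auto
    hence "hamming_dist x y \<le> card (UNIV - I)" unfolding hamming_dist_def by (intro card_mono) auto
    also have "card (UNIV - I) = CARD('n) - (k - 1)" using I by (simp add: card_Diff_subset)
    finally show ?thesis .
  qed
  have Sne: "S \<noteq> {}" unfolding S_def using xy by blast
  have md: "min_dist C = Inf S" unfolding min_dist_def S_def by simp
  have "min_dist C \<le> hamming_dist x y" unfolding md S_def using xy by (intro cInf_lower) auto
  hence "min_dist C \<le> CARD('n) - k + 1" using hxy k1 kn by simp
  moreover have "min_dist C \<noteq> CARD('n) - k + 1" using notMDS dimC unfolding is_MDS_def by simp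
  ultimately have "min_dist C \<le> CARD('n) - k" by simp
  moreover have "min_dist C \<in> S" unfolding md using Inf_nat_def1[OF Sne] .
  ultimately obtain u v where uv: "u \<in> C" "v \<in> C" "u \<noteq> v" "hamming_dist u v \<le> CARD('n) - k"
    unfolding S_def by auto
  have "u - v \<in> C" using vec.subspace_diff[OF lin uv(1,2)] .
  moreover have "u - v \<noteq> 0" using uv by simp
  moreover have eqS: "{i. (u - v) $ i \<noteq> 0} = {i. u $ i \<noteq> v $ i}" by auto
  moreover have "card {i. (u - v) $ i \<noteq> 0} \<le> CARD('n) - k"
    using uv(4) eqS unfolding hamming_dist_def by simp
  ultimately show ?thesis by blast
qed


lemma rr_arith:
  fixes m L t :: nat
  assumes "L * m \<le> t * (L + 1)"
  shows "m - m div (L + 1) \<le> t"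
proof -
  define b where "b = m div (L + 1)"
  define p where "p = m mod (L + 1)"
  have m: "m = b * (L + 1) + p" unfolding b_def p_def by (metis div_mult_mod_eq)
  have pL: "p \<le> L" unfolding p_def
    using pos_mod_bound[of "int (L+1)" "int m"] by (simp add: less_Suc_eq_le)
  have mb: "m - b = b * L + p" unfolding m by (simp add: algebra_simps)
  have "(m - b) * (L + 1) = L * m + p" unfolding mb by (subst m) (simp add: algebra_simps)
  also have "\<dots> \<le> t * (L + 1) + L" using assms pL by simp
  finally have h: "(m - b) * (L + 1) \<le> t * (L + 1) + L" .
  show ?thesis
  proof (rule ccontr)
    assume "\<not> m - m div (L + 1) \<le> t"
    hence "t + 1 \<le> m - b" unfolding b_def by simp
    hence "(t + 1) * (L + 1) \<le> (m - b) * (L + 1)" by (rule mult_le_mono1)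
    thus False using h by (simp add: algebra_simps)
  qed
qed

lemma small_list:
  fixes C :: "('a::{finite,field} ^ 'n) set"
  assumes lin: "vec.subspace C" and cC: "c \<in> C" and c0: "c \<noteq> 0"
    and LQ: "L + 1 \<le> CARD('a)"
    and tau: "L * card {i. c $ i \<noteq> 0} \<le> \<tau> * (L + 1)"
  shows "\<not> list_decodable C \<tau> L"
proof
  assume ld: "list_decodable C \<tau> L"
  define T where "T = {i. c $ i \<noteq> 0}"
  define m where "m = card T"
  have finT: "finite T" by simp
  obtain e where e: "bij_betw e {0..<m} T" using ex_bij_betw_nat_finite[OF finT] unfolding m_def by blast
  obtain a :: "nat \<Rightarrow> 'a" where a: "inj_on a {..L}"
    using card_le_inj[of "{..L}" "UNIV :: 'a set"] LQ by auto
  define b where "b = m div (L + 1)"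
  define ix where "ix = inv_into {0..<m} e"
  define y :: "'a ^ 'n" where "y = (\<chi> j. if j \<in> T \<and> ix j < (L + 1) * b then a (ix j div b) * c $ j else 0)"
  have mb: "m - b \<le> \<tau>" unfolding b_def using rr_arith[of L m \<tau>] tau unfolding m_def T_def by simp
  have bm: "(L + 1) * b \<le> m" unfolding b_def by (rule times_div_less_eq_dividend)
  have close: "hamming_dist (a i *s c) y \<le> \<tau>" if i: "i \<le> L" for i
  proof -
    define P where "P = e ` {i*b..<(i+1)*b}"
    have sub: "{i*b..<(i+1)*b} \<subseteq> {0..<m}"
    proof -
      have "(i+1)*b \<le> (L+1)*b" using i by simp
      hence "(i+1)*b \<le> m" using bm by linarith
      thus ?thesis by auto
    qed
    have PT: "P \<subseteq> T" unfolding P_def using e sub bij_betw_imp_surj_on by blast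
    have cardP: "card P = b"
    proof -
      have "inj_on e {i*b..<(i+1)*b}" using bij_betw_imp_inj_on[OF e] sub inj_on_subset by blast
      hence "card P = card {i*b..<(i+1)*b}" unfolding P_def by (simp add: card_image)
      thus ?thesis by simp
    qed
    have agreeP: "(a i *s c) $ j = y $ j" if j: "j \<in> P" for j
    proof -
      obtain t where t: "t \<in> {i*b..<(i+1)*b}" "j = e t" using j unfolding P_def by blast
      have tm: "t \<in> {0..<m}" using t sub by blast
      have ixj: "ix j = t" unfolding ix_def t(2) using bij_betw_imp_inj_on[OF e] tm by (simp add: inv_into_f_f)
      have bpos: "b > 0" using t by (cases "b = 0") auto
      have tdiv: "t div b = i"
      proof -
        have h: "i * b \<le> t" "t < i * b + b" using t by auto
        define r where "r = t - i * b"
        have tr: "t = r + i * b" "r < b" unfolding r_def using h by auto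
        have "(r + i * b) div b = r div b + i" using bpos by simp
        thus ?thesis using tr by simp
      qed
      have tlt: "t < (L + 1) * b"
      proof -
        have h1: "(i+1)*b \<le> (L+1)*b" using i by simp
        have h2: "t < (i+1)*b" using t by simp
        show ?thesis using less_le_trans[OF h2 h1] .
      qed
      have jT: "j \<in> T" using PT j by blast
      show ?thesis unfolding y_def using jT ixj tlt tdiv by simp
    qed
    have "{j. (a i *s c) $ j \<noteq> y $ j} \<subseteq> T - P"
    proof
      fix j assume j: "j \<in> {j. (a i *s c) $ j \<noteq> y $ j}"
      have "j \<in> T"
      proof (rule ccontr)
        assume "j \<notin> T"
        hence "c $ j = 0" "y $ j = 0" unfolding T_def y_def by auto
        thus False using j by simp
      qed
      moreover have "j \<notin> P" using agreeP j by auto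
      ultimately show "j \<in> T - P" by blast
    qed
    hence "hamming_dist (a i *s c) y \<le> card (T - P)" unfolding hamming_dist_def by (intro card_mono) auto
    also have "card (T - P) = m - b" unfolding m_def using PT cardP finT by (simp add: card_Diff_subset finite_subset)
    finally show ?thesis using mb by simp
  qed
  have "\<exists>j. c $ j \<noteq> 0" using c0 by (simp add: vec_eq_iff)
  then obtain j0 where j0: "c $ j0 \<noteq> 0" by blast
  have inj: "inj_on (\<lambda>i. a i *s c) {..L}"
  proof (rule inj_onI)
    fix i i' assume ii: "i \<in> {..L}" "i' \<in> {..L}" "a i *s c = a i' *s c"
    hence "a i = a i' \<or> c = 0" by simp
    hence "a i = a i'" using c0 by simp
    thus "i = i'" using inj_onD[OF a _ ii(1) ii(2)] by blast
  qed
  have sub: "(\<lambda>i. a i *s c) ` {..L} \<subseteq> {x \<in> C. hamming_dist x y \<le> \<tau>}"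
  proof
    fix x assume "x \<in> (\<lambda>i. a i *s c) ` {..L}"
    then obtain i where i: "i \<le> L" "x = a i *s c" by auto
    show "x \<in> {x \<in> C. hamming_dist x y \<le> \<tau>}" using close[OF i(1)] vec.subspace_scale[OF lin cC] i by simp
  qed
  have "L + 1 = card ((\<lambda>i. a i *s c) ` {..L})" using card_image[OF inj] by simp
  also have "\<dots> \<le> card {x \<in> C. hamming_dist x y \<le> \<tau>}" using sub by (intro card_mono) auto
  also have "\<dots> \<le> L" using ld unfolding list_decodable_def by blast
  finally show False by simp
qed


lemma card_filter_ind: "finite A \<Longrightarrow> card {x\<in>A. P x} = (\<Sum>x\<in>A. if P x then 1 else (0::nat))"
  by (simp add: sum.If_cases Int_def)

lemma sphere_card:
  fixes c :: "'a::{finite,field} ^ 'n"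
  shows "(CARD('n) choose w) * (CARD('a) - 1) ^ w \<le> card {y. hamming_dist c y = w}"
proof -
  define SS where "SS = {S. S \<subseteq> (UNIV::'n set) \<and> card S = w}"
  define Sig where "Sig = Sigma SS (\<lambda>S. S \<rightarrow>\<^sub>E (UNIV - {0::'a}))"
  define Phi where "Phi = (\<lambda>(S, g). (\<chi> j. if j \<in> S then c $ j + g j else c $ j) :: 'a ^ 'n)"
  have cardSS: "card SS = CARD('n) choose w" unfolding SS_def using n_subsets[of "UNIV :: 'n set" w] by simp
  have cardPi: "card (S \<rightarrow>\<^sub>E (UNIV - {0::'a})) = (CARD('a) - 1) ^ w" if "S \<in> SS" for S
  proof -
    have "card (UNIV - {0::'a}) = CARD('a) - 1" by (simp add: card_Diff_subset)
    thus ?thesis using that unfolding SS_def by (simp add: card_PiE)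
  qed
  have cardSig: "card Sig = (CARD('n) choose w) * (CARD('a) - 1) ^ w"
  proof -
    have "card Sig = (\<Sum>S\<in>SS. card (S \<rightarrow>\<^sub>E (UNIV - {0::'a})))"
      unfolding Sig_def by (intro card_SigmaI) auto
    also have "\<dots> = (\<Sum>S\<in>SS. (CARD('a) - 1) ^ w)" using cardPi by simp
    also have "\<dots> = card SS * (CARD('a) - 1) ^ w" by simp
    finally show ?thesis using cardSS by simp
  qed
  have diffset: "{j. c $ j \<noteq> Phi (S, g) $ j} = S" if "(S, g) \<in> Sig" for S g
  proof -
    have g: "g j \<noteq> 0" if "j \<in> S" for j using \<open>(S, g) \<in> Sig\<close> that unfolding Sig_def by auto
    show ?thesis unfolding Phi_def using g by auto
  qed
  have inj: "inj_on Phi Sig"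
  proof (rule inj_onI)
    fix x x' assume x: "x \<in> Sig" "x' \<in> Sig" "Phi x = Phi x'"
    obtain S g where Sg: "x = (S, g)" by (cases x)
    obtain S' g' where Sg': "x' = (S', g')" by (cases x')
    have SS': "S = S'" using diffset[of S g] diffset[of S' g'] x Sg Sg' by metis
    have gg: "g j = g' j" if "j \<in> S" for j
    proof -
      have "Phi (S, g) $ j = Phi (S', g') $ j" using x Sg Sg' by simp
      thus ?thesis using that SS' unfolding Phi_def by simp
    qed
    have "g \<in> S \<rightarrow>\<^sub>E (UNIV - {0})" "g' \<in> S \<rightarrow>\<^sub>E (UNIV - {0})" using x Sg Sg' SS' unfolding Sig_def by auto
    hence "g = g'" using gg by (intro PiE_ext) auto
    thus "x = x'" using Sg Sg' SS' by simp
  qed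
  have img: "Phi ` Sig \<subseteq> {y. hamming_dist c y = w}"
  proof
    fix y assume "y \<in> Phi ` Sig"
    then obtain S g where Sg: "(S, g) \<in> Sig" "y = Phi (S, g)" by auto
    have "card S = w" using Sg unfolding Sig_def SS_def by auto
    thus "y \<in> {y. hamming_dist c y = w}" unfolding hamming_dist_def using diffset[OF Sg(1)] Sg(2) by simp
  qed
  have "card Sig = card (Phi ` Sig)" using card_image[OF inj] by simp
  also have "\<dots> \<le> card {y. hamming_dist c y = w}" using img by (intro card_mono) auto
  finally show ?thesis using cardSig by simp
qed

lemma averaging:
  fixes C :: "('a::{finite,field} ^ 'n) set"
  assumes ld: "list_decodable C \<tau> L" and wt: "w \<le> \<tau>"
  shows "card C * ((CARD('n) choose w) * (CARD('a) - 1) ^ w) \<le> L * CARD('a) ^ CARD('n)"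
proof -
  define P where "P = (\<lambda>c y. hamming_dist (c :: 'a^'n) y \<le> \<tau>)"
  have finC: "finite C" by simp
  have "(\<Sum>y\<in>(UNIV :: ('a^'n) set). card {c\<in>C. P c y}) \<le> (\<Sum>y\<in>(UNIV :: ('a^'n) set). L)"
    using ld unfolding list_decodable_def P_def by (intro sum_mono) auto
  also have "\<dots> = L * CARD('a) ^ CARD('n)" by (simp add: CARD_vec)
  finally have up: "(\<Sum>y\<in>(UNIV :: ('a^'n) set). card {c\<in>C. P c y}) \<le> L * CARD('a) ^ CARD('n)" .
  have "(\<Sum>y\<in>(UNIV :: ('a^'n) set). card {c\<in>C. P c y}) = (\<Sum>y\<in>UNIV. \<Sum>c\<in>C. if P c y then 1 else (0::nat))"
    using card_filter_ind[OF finC] by simp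
  also have "\<dots> = (\<Sum>c\<in>C. \<Sum>y\<in>UNIV. if P c y then 1 else (0::nat))" by (rule sum.swap)
  also have "\<dots> = (\<Sum>c\<in>C. card {y. P c y})"
    using card_filter_ind[of "UNIV :: ('a^'n) set"] by simp
  finally have sw: "(\<Sum>y\<in>(UNIV :: ('a^'n) set). card {c\<in>C. P c y}) = (\<Sum>c\<in>C. card {y. P c y})" .
  have lo: "(CARD('n) choose w) * (CARD('a) - 1) ^ w \<le> card {y. P c y}" for c
  proof -
    have "{y. hamming_dist c y = w} \<subseteq> {y. P c y}" unfolding P_def using wt by auto
    hence "card {y. hamming_dist c y = w} \<le> card {y. P c y}" by (intro card_mono) auto
    thus ?thesis using sphere_card[of w c] by simp
  qed
  have "card C * ((CARD('n) choose w) * (CARD('a) - 1) ^ w) = (\<Sum>c\<in>C. (CARD('n) choose w) * (CARD('a) - 1) ^ w)" by simp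
  also have "\<dots> \<le> (\<Sum>c\<in>C. card {y. P c y})" using lo by (intro sum_mono) auto
  finally show ?thesis using sw up by simp
qed


theorem mainTheorem3:
  fixes C :: "('a::{finite,field} ^ 'n) set"
    and \<epsilon> :: real and k L \<tau> :: nat
  assumes eps: "0 < \<epsilon>" "\<epsilon> \<le> 1/2"
    and lin: "vec.subspace C" and dimC: "vec.dim C = k"
    and rate: "\<epsilon> \<le> real k / real CARD('n)" "real k / real CARD('n) \<le> 1 - \<epsilon>"
    and Lpos: "0 < L"
    and Lbound: "real L < 1 / sqrt (2 * real CARD('n)) * 2 powr (eta CARD('a) \<epsilon> * real CARD('n))"
    and tau: "real \<tau> \<ge> real L * (real CARD('n) - real k) / (real L + 1)"
    and ld: "list_decodable C \<tau> L"
  shows "is_MDS C"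
proof (rule ccontr)
  assume nM: "\<not> is_MDS C"
  define n where "n = CARD('n)"
  define q where "q = CARD('a)"
  have q2: "q \<ge> 2"
  proof -
    have "card {0 :: 'a, 1} = 2" by simp
    moreover have "card {0 :: 'a, 1} \<le> CARD('a)" by (intro card_mono) auto
    ultimately show ?thesis unfolding q_def by simp
  qed
  have n1: "n \<ge> 1" unfolding n_def using finite_UNIV_card_ge_0 by (simp add: Suc_le_eq)
  have np: "real n > 0" using n1 by simp
  have k1: "k \<ge> 1"
  proof -
    have "real k / real n > 0" using eps rate unfolding n_def by linarith
    thus ?thesis using np by (simp add: zero_less_divide_iff)
  qed
  have kn: "k < n"
  proof -
    have "real k / real n < 1" using eps rate unfolding n_def by linarith
    thus ?thesis using np by simp
  qed
  define s where "s = n - k"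
  have s1: "1 \<le> s" "s < n" unfolding s_def using kn k1 by auto
  have rs: "real s = real n - real k" unfolding s_def using kn by simp
  have es: "\<epsilon> * real n \<le> real s" "real s \<le> (1 - \<epsilon>) * real n"
  proof -
    have "real k \<le> (1 - \<epsilon>) * real n" using rate(2) np unfolding n_def by (simp add: divide_simps)
    thus "\<epsilon> * real n \<le> real s" unfolding rs by (simp add: algebra_simps)
    have "\<epsilon> * real n \<le> real k" using rate(1) np unfolding n_def by (simp add: divide_simps)
    thus "real s \<le> (1 - \<epsilon>) * real n" unfolding rs by (simp add: algebra_simps)
  qed
  have tau': "real L * real s \<le> real \<tau> * (real L + 1)"
    using tau rs unfolding n_def by (simp add: divide_simps)
  obtain c where c: "c \<in> C" "c \<noteq> 0" "card {i. c $ i \<noteq> 0} \<le> CARD('n) - k"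
    using exists_low_weight[OF lin dimC k1 _ nM] kn unfolding n_def by auto
  show False
  proof (cases "L + 1 \<le> q")
    case True
    have "real (L * card {i. c $ i \<noteq> 0}) \<le> real L * real s"
      using c(3) unfolding s_def n_def by (simp add: mult_left_mono)
    also have "\<dots> \<le> real (\<tau> * (L + 1))" using tau' by (simp add: algebra_simps)
    finally have "L * card {i. c $ i \<noteq> 0} \<le> \<tau> * (L + 1)" by (simp only: of_nat_le_iff)
    thus False using small_list[OF lin c(1) c(2) _ ] True ld unfolding q_def by blast
  next
    case False
    hence Lq: "q \<le> L" by simp
    define Q where "Q = real q"
    have Q2: "Q \<ge> 2" unfolding Q_def using q2 by simp
    define x where "x = (Q - 1) / Q * real s"
    define w where "w = nat \<lceil>x\<rceil>"
    have x0: "x \<ge> 0" unfolding x_def using Q2 by simp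
    have w1: "x \<le> real w" unfolding w_def using x0 ceiling_correct[of x] by linarith
    have w2: "real w * Q \<le> (Q - 1) * (real s + 1)"
    proof -
      have "real w < x + 1" unfolding w_def using x0 ceiling_correct[of x] by linarith
      hence "real w * Q < (x + 1) * Q" using Q2 by (intro mult_strict_right_mono) auto
      also have "(x + 1) * Q = (Q - 1) * real s + Q" unfolding x_def using Q2 by (simp add: field_simps)
      finally have "real (w * q) < real ((q - 1) * s + q)" unfolding Q_def using q2 by (simp add: of_nat_diff)
      hence "w * q < (q - 1) * s + q" by (simp only: of_nat_less_iff)
      hence "w * q \<le> (q - 1) * (s + 1)" using q2 by (simp add: algebra_simps)
      hence h: "real (w * q) \<le> real ((q - 1) * (s + 1))" by (simp only: of_nat_le_iff)
      have e0: "real (q - 1) = real q - 1" using q2 by (simp add: of_nat_diff)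
      have e1: "real ((q - 1) * (s + 1)) = (real q - 1) * (real s + 1)"
        by (simp only: of_nat_mult e0 of_nat_add of_nat_1)
      have e2: "real (w * q) = real w * real q" by simp
      show ?thesis using h unfolding e1 e2 Q_def .
    qed
    have wt: "w \<le> \<tau>"
    proof -
      have "(Q - 1) / Q \<le> real L / (real L + 1)"
        using Lq Q2 unfolding Q_def by (simp add: divide_simps algebra_simps)
      hence "x \<le> real L / (real L + 1) * real s" unfolding x_def by (intro mult_right_mono) auto
      also have "\<dots> \<le> real \<tau>" using tau' by (simp add: divide_simps mult.commute)
      finally have "\<lceil>x\<rceil> \<le> int \<tau>" by (intro ceiling_le) simp
      thus ?thesis unfolding w_def by (simp only: nat_le_iff)
    qed
    have avg: "card C * ((n choose w) * (q - 1) ^ w) \<le> L * q ^ n"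
      using averaging[OF ld wt] unfolding n_def q_def .
    have cc: "q ^ k \<le> card C" using card_subspace_ge[OF lin] dimC unfolding q_def by simp
    have "q ^ k * ((n choose w) * (q - 1) ^ w) \<le> L * q ^ n"
      using avg cc by (meson le_trans mult_le_mono1)
    hence "real (q ^ k * ((n choose w) * (q - 1) ^ w)) \<le> real (L * q ^ n)" by (simp only: of_nat_le_iff)
    hence "Q ^ k * (real (n choose w) * (Q - 1) ^ w) \<le> real L * (Q ^ k * Q ^ s)"
      unfolding Q_def using q2 kn by (simp add: of_nat_diff power_add[symmetric] s_def)
    hence le1: "real (n choose w) * (Q - 1) ^ w / Q ^ s \<le> real L"
      using Q2 by (simp add: divide_simps mult_ac)
    have "1 / sqrt (2 * real n) * 2 powr (eta q \<epsilon> * real n) \<le> real (n choose w) * (real q - 1) ^ w / real q ^ s"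
      by (rule analytic_main[OF q2 s1 eps es]) (use w1 w2 in \<open>simp_all add: x_def Q_def\<close>)
    hence "1 / sqrt (2 * real n) * 2 powr (eta q \<epsilon> * real n) \<le> real L" using le1 unfolding Q_def by simp
    thus False using Lbound unfolding n_def q_def by simp
  qed
qed


end
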